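(* Let $V$ be a real vector space and $\mathcal R:V\to\mathbb R$ an $\eta$-proper regularizer for some $\eta\ge1$. Let $f_\star,h\in V$ with $\mathcal R(h-f_\star)=\rho$, where $\rho\ge5\eta\,\mathcal R(f_\star)$, let $\beta\ge1$ and $\hat f:=f_\star+\beta(h-f_\star)$. Then $$\mathcal R(\hat f)-\mathcal R(f_\star)\ge\frac{\beta}{2\eta^2}\big(\mathcal R(h)-\mathcal R(f_\star)\big).$$
   Context: A function $\mathcal R:V\to\mathbb R$ is an $\eta$-proper regularizer ($\eta\ge1$) if: (a) it is non-negative, even, convex, and $\mathcal R(0)=0$; (b) $\mathcal R(f+g)\le\eta(\mathcal R(f)+\mathcal R(g))$ for all $f,g\in V$; (c) $\mathcal R(af)\le a\,\mathcal R(f)$ for all $0\le a\le1$, and if $\eta=2$ moreover $\mathcal R(af)\le a^2\mathcal R(f)$. (For example $\mathcal R(f)=\|\mathcal Df\|^2$ for a linear operator $\mathcal D$ is $2$-proper.) *)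

theory Defs
  imports "HOL-Analysis.Analysis"
begin

definition proper_regularizer :: "real \<Rightarrow> ('a::real_vector \<Rightarrow> real) \<Rightarrow> bool" where
  "proper_regularizer \<eta> R \<longleftrightarrow>
     \<eta> \<ge> 1 \<and>
     (\<forall>f. R f \<ge> 0) \<and>
     (\<forall>f. R (- f) = R f) \<and>
     convex_on UNIV R \<and>
     R 0 = 0 \<and>
     (\<forall>f g. R (f + g) \<le> \<eta> * (R f + R g)) \<and>
     (\<forall>a f. 0 \<le> a \<and> a \<le> 1 \<longrightarrow> R (a *\<^sub>R f) \<le> a * R f) \<and>
     (\<eta> = 2 \<longrightarrow> (\<forall>a f. 0 \<le> a \<and> a \<le> 1 \<longrightarrow> R (a *\<^sub>R f) \<le> a\<^sup>2 * R f))"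

end

theory Submission
  imports Defs
begin

theorem mainTheorem10:
  fixes R :: "'a::real_vector \<Rightarrow> real" and \<eta> \<rho> \<beta> :: real and fstar h :: 'a
  assumes "proper_regularizer \<eta> R"
    and "R (h - fstar) = \<rho>"
    and "\<rho> \<ge> 5 * \<eta> * R fstar"
    and "\<beta> \<ge> 1"
  shows "R (fstar + \<beta> *\<^sub>R (h - fstar)) - R fstar \<ge> \<beta> / (2 * \<eta>\<^sup>2) * (R h - R fstar)"
proof -
  have eta: "\<eta> \<ge> 1" and nn: "\<And>f. R f \<ge> 0" and ev: "\<And>f. R (- f) = R f"
    and cv: "convex_on UNIV R" and tri: "\<And>f g. R (f + g) \<le> \<eta> * (R f + R g)"
    using assms(1) unfolding proper_regularizer_def by auto
  have "\<rho> \<le> \<eta> * (R h + R fstar)"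
    using tri[of h "- fstar"] ev[of fstar] assms(2) by simp
  with assms(3) eta have "\<eta> * (5 * R fstar) \<le> \<eta> * (R h + R fstar)" by (simp only: algebra_simps)
  with eta have "5 * R fstar \<le> R h + R fstar" by simp
  with nn[of fstar] have X: "R h - R fstar \<ge> 0" by simp
  define fh where "fh = fstar + \<beta> *\<^sub>R (h - fstar)"
  have hb: "h = (1 - 1/\<beta>) *\<^sub>R fstar + (1/\<beta>) *\<^sub>R fh"
    using assms(4) unfolding fh_def by (simp add: algebra_simps)
  have "R h \<le> (1 - 1/\<beta>) * R fstar + (1/\<beta>) * R fh"
    unfolding hb using assms(4)
    by (intro convex_onD[OF cv]) (auto simp: field_simps)
  then have "\<beta> * R h \<le> \<beta> * ((1 - 1/\<beta>) * R fstar + (1/\<beta>) * R fh)"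
    using assms(4) by (intro mult_left_mono) auto
  also have "\<dots> = (\<beta> - 1) * R fstar + R fh" using assms(4) by (simp add: field_simps)
  finally have main: "R fh - R fstar \<ge> \<beta> * (R h - R fstar)" by (simp add: algebra_simps)
  have "\<beta> / (2 * \<eta>\<^sup>2) \<le> \<beta>"
  proof -
    have "1 \<le> \<eta>\<^sup>2" using eta by (simp add: one_le_power)
    then have "1 \<le> 2 * \<eta>\<^sup>2" by simp
    then have "\<beta> / (2 * \<eta>\<^sup>2) \<le> \<beta> / 1"
      using assms(4) by (intro divide_left_mono) auto
    then show ?thesis by simp
  qed
  then have "\<beta> / (2 * \<eta>\<^sup>2) * (R h - R fstar) \<le> \<beta> * (R h - R fstar)"
    using X by (intro mult_right_mono) auto
  with main show ?thesis unfolding fh_def by simp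
qed

end
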